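(* Let $\mathbf A,\mathbf B$ be complete perfect DqRAs and $h:\mathbf A\to\mathbf B$ a complete homomorphism. Define $h_+:J^\infty(\mathbf B)\to J^\infty(\mathbf A)$ by $h_+(b)=\bigwedge\{a\in A\mid b\leqslant h(a)\}$. Then: (i) $h_+$ is a DqRA-frame morphism from $\mathbf B_+$ to $\mathbf A_+$, i.e. in addition to being a DInFL-frame morphism it satisfies $h_+(b^\neg)=h_+(b)^\neg$ for all $b\in J^\infty(\mathbf B)$; (ii) if $h$ is surjective then $h_+$ is an order-embedding; (iii) if $h$ is injective then $h_+$ is surjective.
   Context: A DqRA is $(A,\wedge,\vee,\cdot,1,\sim,-,\neg)$ with $(A,\wedge,\vee)$ a distributive lattice, $(A,\cdot,1)$ a monoid, $a\cdot b\leqslant c\iff a\leqslant -(b\cdot{\sim}c)\iff b\leqslant{\sim}(-c\cdot a)$, $\neg\neg a=a$, $\neg(a\wedge b)=\neg a\vee\neg b$, and $\neg(a\cdot b)=\neg a+\neg b$ where $a+b=-({\sim}b\cdot{\sim}a)$. Complete perfect: complete, every element the join of completely join-irreducibles ($J^\infty$) below it and meet of completely meet-irreducibles above it. A complete homomorphism preserves all operations and arbitrary joins and meets. $\kappa(j)=\bigvee\{a\mid j\not\leqslant a\}$. $\mathbf A_+=(J^\infty(\mathbf A),I_1,\preccurlyeq,\circ,{}^\sim,{}^-,{}^\neg)$ with $I_1=\{i\in J^\infty(\mathbf A)\mid i\leqslant 1\}$, $a\preccurlyeq b$ iff $b\leqslant a$, $c\in a\circ b$ iff $c\leqslant a\cdot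 b$, $a^\sim={\sim}\kappa(a)$, $a^-=-\kappa(a)$, $a^\neg=\neg\kappa(a)$. A DInFL-frame morphism between $(W_1,I_1,\preccurlyeq_1,\circ_1,{}^{\sim_1},{}^{-_1})$ and $(W_2,I_2,\preccurlyeq_2,\circ_2,{}^{\sim_2},{}^{-_2})$ is $f:W_1\to W_2$ with, for all $x,y,z\in W_1$, $u,v\in W_2$: (M1) $x\preccurlyeq_1 y\Rightarrow f(x)\preccurlyeq_2 f(y)$; (M2) $z\in x\circ_1 y\Rightarrow f(z)\in f(x)\circ_2 f(y)$; (M3) if $f(z)\in u\circ_2 v$ then there exist $x,y$ with $u\preccurlyeq_2 f(x)$, $v\preccurlyeq_2 f(y)$, $z\in x\circ_1 y$; (M4) $f(x^{\sim_1})=f(x)^{\sim_2}$; (M5) $f(x^{-_1})=f(x)^{-_2}$; (M6) $I_1=f^{-1}[I_2]$. A DqRA-frame morphism additionally satisfies (M7) $f(x^{\neg_1})=f(x)^{\neg_2}$. *)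

theory Defs
  imports Main
begin

text \<open>A DqRA on a (complete) lattice type 'a: the lattice operations are those of
  the type; the remaining operations are collected in a record.\<close>

record 'a dqra_ops =
  mul  :: "'a \<Rightarrow> 'a \<Rightarrow> 'a"
  one  :: "'a"
  tl   :: "'a \<Rightarrow> 'a"
  mn   :: "'a \<Rightarrow> 'a"
  ng   :: "'a \<Rightarrow> 'a"

definition dplus :: "('a, 'b) dqra_ops_scheme \<Rightarrow> 'a \<Rightarrow> 'a \<Rightarrow> 'a" where
  "dplus A a b = mn A (mul A (tl A b) (tl A a))"

definition is_DqRA :: "('a::lattice, 'b) dqra_ops_scheme \<Rightarrow> bool" where
  "is_DqRA A \<longleftrightarrow>
     (\<forall>a b c::'a. inf a (sup b c) = sup (inf a b) (inf a c)) \<and>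
     (\<forall>a b c. mul A (mul A a b) c = mul A a (mul A b c)) \<and>
     (\<forall>a. mul A (one A) a = a \<and> mul A a (one A) = a) \<and>
     (\<forall>a b c. (mul A a b \<le> c \<longleftrightarrow> a \<le> mn A (mul A b (tl A c))) \<and>
              (a \<le> mn A (mul A b (tl A c)) \<longleftrightarrow> b \<le> tl A (mul A (mn A c) a))) \<and>
     (\<forall>a. ng A (ng A a) = a) \<and>
     (\<forall>a b. ng A (inf a b) = sup (ng A a) (ng A b)) \<and>
     (\<forall>a b. ng A (mul A a b) = dplus A (ng A a) (ng A b))"

definition Jinf :: "'a::complete_lattice set" where
  "Jinf = {j. \<forall>S. j = Sup S \<longrightarrow> j \<in> S}"

definition Minf :: "'a::complete_lattice set" where
  "Minf = {m. \<forall>S. m = Inf S \<longrightarrow> m \<in> S}"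

definition perfect :: "'a::complete_lattice itself \<Rightarrow> bool" where
  "perfect _ \<longleftrightarrow> (\<forall>a::'a. a = Sup {j \<in> Jinf. j \<le> a} \<and> a = Inf {m \<in> Minf. a \<le> m})"

definition complete_perfect_DqRA :: "('a::complete_lattice, 'b) dqra_ops_scheme \<Rightarrow> bool" where
  "complete_perfect_DqRA A \<longleftrightarrow> is_DqRA A \<and> perfect TYPE('a)"

definition kappa :: "'a::complete_lattice \<Rightarrow> 'a" where
  "kappa j = Sup {a. \<not> j \<le> a}"

definition complete_hom ::
  "('a::complete_lattice, 'c) dqra_ops_scheme \<Rightarrow> ('b::complete_lattice, 'd) dqra_ops_scheme
    \<Rightarrow> ('a \<Rightarrow> 'b) \<Rightarrow> bool" where
  "complete_hom A B h \<longleftrightarrow>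
     (\<forall>a b. h (inf a b) = inf (h a) (h b)) \<and>
     (\<forall>a b. h (sup a b) = sup (h a) (h b)) \<and>
     (\<forall>a b. h (mul A a b) = mul B (h a) (h b)) \<and>
     h (one A) = one B \<and>
     (\<forall>a. h (tl A a) = tl B (h a)) \<and>
     (\<forall>a. h (mn A a) = mn B (h a)) \<and>
     (\<forall>a. h (ng A a) = ng B (h a)) \<and>
     (\<forall>S. h (Sup S) = Sup (h ` S)) \<and>
     (\<forall>S. h (Inf S) = Inf (h ` S))"

record 'a frame =
  W     :: "'a set"
  Iset  :: "'a set"
  prec  :: "'a \<Rightarrow> 'a \<Rightarrow> bool"
  circ  :: "'a \<Rightarrow> 'a \<Rightarrow> 'a set"
  ftl   :: "'a \<Rightarrow> 'a"
  fmn   :: "'a \<Rightarrow> 'a"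
  fng   :: "'a \<Rightarrow> 'a"

definition dual_frame :: "('a::complete_lattice, 'b) dqra_ops_scheme \<Rightarrow> 'a frame" where
  "dual_frame A =
     \<lparr> W = Jinf,
       Iset = {i \<in> Jinf. i \<le> one A},
       prec = (\<lambda>a b. b \<le> a),
       circ = (\<lambda>a b. {c \<in> Jinf. c \<le> mul A a b}),
       ftl = (\<lambda>a. tl A (kappa a)),
       fmn = (\<lambda>a. mn A (kappa a)),
       fng = (\<lambda>a. ng A (kappa a)) \<rparr>"

definition DInFL_frame_morphism :: "'a frame \<Rightarrow> 'b frame \<Rightarrow> ('a \<Rightarrow> 'b) \<Rightarrow> bool" where
  "DInFL_frame_morphism F G f \<longleftrightarrow>
     (\<forall>x\<in>W F. f x \<in> W G) \<and>
     (\<forall>x\<in>W F. \<forall>y\<in>W F. prec F x y \<longrightarrow> prec G (f x) (f y)) \<and>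
     (\<forall>x\<in>W F. \<forall>y\<in>W F. \<forall>z\<in>W F. z \<in> circ F x y \<longrightarrow> f z \<in> circ G (f x) (f y)) \<and>
     (\<forall>z\<in>W F. \<forall>u\<in>W G. \<forall>v\<in>W G. f z \<in> circ G u v \<longrightarrow>
        (\<exists>x\<in>W F. \<exists>y\<in>W F. prec G u (f x) \<and> prec G v (f y) \<and> z \<in> circ F x y)) \<and>
     (\<forall>x\<in>W F. f (ftl F x) = ftl G (f x)) \<and>
     (\<forall>x\<in>W F. f (fmn F x) = fmn G (f x)) \<and>
     Iset F = {x \<in> W F. f x \<in> Iset G}"

definition DqRA_frame_morphism :: "'a frame \<Rightarrow> 'b frame \<Rightarrow> ('a \<Rightarrow> 'b) \<Rightarrow> bool" where
  "DqRA_frame_morphism F G f \<longleftrightarrow>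
     DInFL_frame_morphism F G f \<and> (\<forall>x\<in>W F. f (fng F x) = fng G (f x))"

definition lower_adj :: "('a::complete_lattice \<Rightarrow> 'b::complete_lattice) \<Rightarrow> 'b \<Rightarrow> 'a" where
  "lower_adj h b = Inf {a. b \<le> h a}"

end

theory Submission
  imports Defs
begin

lemma DqRA_res1: "is_DqRA A \<Longrightarrow> mul A a b \<le> c \<longleftrightarrow> a \<le> mn A (mul A b (tl A c))"
  unfolding is_DqRA_def by blast
lemma DqRA_res2: "is_DqRA A \<Longrightarrow> mul A a b \<le> c \<longleftrightarrow> b \<le> tl A (mul A (mn A c) a)"
  unfolding is_DqRA_def by blast
lemma DqRA_unit1: "is_DqRA A \<Longrightarrow> mul A (one A) a = a"
  unfolding is_DqRA_def by blast
lemma DqRA_unit2: "is_DqRA A \<Longrightarrow> mul A a (one A) = a"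
  unfolding is_DqRA_def by blast
lemma DqRA_ngng: "is_DqRA A \<Longrightarrow> ng A (ng A a) = a"
  unfolding is_DqRA_def by blast
lemma DqRA_nginf: "is_DqRA A \<Longrightarrow> ng A (inf a b) = sup (ng A a) (ng A b)"
  unfolding is_DqRA_def by blast
lemma DqRA_distrib: fixes A :: "('a::lattice,'b) dqra_ops_scheme" and a b c :: 'a
  shows "is_DqRA A \<Longrightarrow> inf a (sup b c) = sup (inf a b) (inf a c)"
  unfolding is_DqRA_def by blast

lemma eq_by_up: fixes x y :: "'a::order" assumes "\<And>a. x \<le> a \<longleftrightarrow> y \<le> a" shows "x = y"
  using assms by (meson order.antisym order.refl)
lemma eq_by_down: fixes x y :: "'a::order" assumes "\<And>a. a \<le> x \<longleftrightarrow> a \<le> y" shows "x = y"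
  using assms by (meson order.antisym order.refl)

lemma mn_tl: assumes "is_DqRA A" shows "mn A (tl A c) = c"
proof -
  have "\<And>a. a \<le> c \<longleftrightarrow> a \<le> mn A (tl A c)"
    using DqRA_res1[OF assms, where b="one A" and c=c] DqRA_unit1[OF assms] DqRA_unit2[OF assms] by simp
  then show ?thesis by (rule eq_by_down[symmetric])
qed

lemma tl_mn: assumes "is_DqRA A" shows "tl A (mn A c) = c"
proof -
  have "\<And>b. b \<le> c \<longleftrightarrow> b \<le> tl A (mn A c)"
    using DqRA_res2[OF assms, where a="one A" and c=c] DqRA_unit1[OF assms] DqRA_unit2[OF assms] by simp
  then show ?thesis by (rule eq_by_down[symmetric])
qed

lemma mul_mono1: assumes "is_DqRA A" "a \<le> a'" shows "mul A a b \<le> mul A a' b"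
proof -
  have "a' \<le> mn A (mul A b (tl A (mul A a' b)))" using DqRA_res1[OF assms(1)] by blast
  then show ?thesis using DqRA_res1[OF assms(1)] assms(2) order_trans by blast
qed

lemma mul_mono2: assumes "is_DqRA A" "b \<le> b'" shows "mul A a b \<le> mul A a b'"
proof -
  have "b' \<le> tl A (mul A (mn A (mul A a b')) a)" using DqRA_res2[OF assms(1)] by blast
  then show ?thesis using DqRA_res2[OF assms(1)] assms(2) order_trans by blast
qed

lemma mul_mono: assumes "is_DqRA A" "a \<le> a'" "b \<le> b'" shows "mul A a b \<le> mul A a' b'"
  using mul_mono1[OF assms(1,2)] mul_mono2[OF assms(1,3)] order_trans by blast

lemma tl_anti: assumes "is_DqRA A" "x \<le> y" shows "tl A y \<le> tl A x"
proof -
  have E: "\<And>a b. b \<le> tl A a \<longleftrightarrow> mul A a b \<le> tl A (one A)"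
    using DqRA_res2[OF assms(1), where c="tl A (one A)"] mn_tl[OF assms(1)] DqRA_unit1[OF assms(1)] by simp
  have "mul A y (tl A y) \<le> tl A (one A)" using E by blast
  then have "mul A x (tl A y) \<le> tl A (one A)" using mul_mono1[OF assms] order_trans by blast
  then show ?thesis using E by blast
qed

lemma mn_anti: assumes "is_DqRA A" "x \<le> y" shows "mn A y \<le> mn A x"
proof -
  have E: "\<And>a b. a \<le> mn A b \<longleftrightarrow> mul A a b \<le> mn A (one A)"
    using DqRA_res1[OF assms(1), where c="mn A (one A)"] tl_mn[OF assms(1)] DqRA_unit2[OF assms(1)] by simp
  have "mul A (mn A y) y \<le> mn A (one A)" using E by blast
  then have "mul A (mn A y) x \<le> mn A (one A)" using mul_mono2[OF assms] order_trans by blast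
  then show ?thesis using E by blast
qed

lemma tl_gal: assumes "is_DqRA A" shows "tl A p \<le> q \<longleftrightarrow> mn A q \<le> p"
  by (metis assms mn_anti mn_tl tl_anti tl_mn)

lemma ng_anti: assumes "is_DqRA A" "x \<le> y" shows "ng A y \<le> ng A x"
  by (metis DqRA_nginf assms inf.absorb1 sup.cobounded2)

lemma ng_gal: assumes "is_DqRA A" shows "ng A p \<le> q \<longleftrightarrow> ng A q \<le> p"
  by (metis DqRA_ngng assms ng_anti)

lemma mul_Sup: fixes A :: "('a::complete_lattice,'b) dqra_ops_scheme"
  assumes "is_DqRA A"
  shows "mul A (Sup X) (Sup Y) \<le> Sup {mul A x y | x y. x \<in> X \<and> y \<in> Y}"
proof -
  define c where "c = Sup {mul A x y | x y. x \<in> X \<and> y \<in> Y}"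
  have "x \<le> mn A (mul A (Sup Y) (tl A c))" if "x \<in> X" for x
  proof -
    have "y \<le> tl A (mul A (mn A c) x)" if "y \<in> Y" for y
    proof -
      have "mul A x y \<le> c" unfolding c_def using \<open>x \<in> X\<close> \<open>y \<in> Y\<close> by (intro Sup_upper CollectI exI conjI) auto
      then show ?thesis using DqRA_res2[OF assms] by blast
    qed
    then have "Sup Y \<le> tl A (mul A (mn A c) x)" by (auto intro: Sup_least)
    then have "mul A x (Sup Y) \<le> c" using DqRA_res2[OF assms] by blast
    then show ?thesis using DqRA_res1[OF assms] by blast
  qed
  then have "Sup X \<le> mn A (mul A (Sup Y) (tl A c))" by (auto intro: Sup_least)
  then show ?thesis unfolding c_def[symmetric] using DqRA_res1[OF assms] by blast
qed

lemma Jinf_not_le_kappa: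
  fixes j :: "'a::complete_lattice"
  assumes D: "\<And>a b c::'a. inf a (sup b c) = sup (inf a b) (inf a c)"
    and P: "perfect TYPE('a)" and J: "j \<in> Jinf"
  shows "\<not> j \<le> kappa j"
proof -
  define js where "js = Sup {x. x < j}"
  have js_le: "js \<le> j" unfolding js_def by (auto intro: Sup_least)
  have js_ne: "js \<noteq> j"
  proof
    assume "js = j"
    then have "j \<in> {x. x < j}" using J unfolding Jinf_def js_def by (auto dest: spec[of _ "{x. x < j}"])
    then show False by simp
  qed
  have below: "\<And>x. x \<le> j \<Longrightarrow> x \<noteq> j \<Longrightarrow> x \<le> js" unfolding js_def by (auto intro: Sup_upper)
  have njs: "\<not> j \<le> js" using js_le js_ne by auto
  have "js = Inf {m \<in> Minf. js \<le> m}" using P unfolding perfect_def by blast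
  then obtain m where mM: "m \<in> Minf" and jsm: "js \<le> m" and njm: "\<not> j \<le> m"
    using njs by (metis (mono_tags, lifting) le_Inf_iff mem_Collect_eq)
  define ms where "ms = Inf {x. m < x}"
  have m_le: "m \<le> ms" unfolding ms_def by (auto intro: Inf_greatest)
  have ms_ne: "ms \<noteq> m"
  proof
    assume "ms = m"
    then have "m \<in> {x. m < x}" using mM unfolding Minf_def ms_def by (auto dest: spec[of _ "{x. m < x}"])
    then show False by simp
  qed
  have above: "\<And>x. m < x \<Longrightarrow> ms \<le> x" unfolding ms_def by (auto intro: Inf_lower)
  have key: "a \<le> m" if nja: "\<not> j \<le> a" for a
  proof (rule ccontr)
    assume nam: "\<not> a \<le> m"
    have "m < sup m a" using nam by (metis less_le sup.cobounded1 sup.cobounded2)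
    then have msa: "ms \<le> sup m a" using above by blast
    have "m < sup m j" using njm by (metis less_le sup.cobounded1 sup.cobounded2)
    then have msj: "ms \<le> sup m j" using above by blast
    have "ms = inf ms (sup m j)" using msj by (simp add: inf.absorb1)
    also have "\<dots> = sup (inf ms m) (inf ms j)" by (rule D)
    also have "\<dots> = sup m (inf ms j)" using m_le by (simp add: inf.absorb2)
    finally have ms_eq: "ms = sup m (inf ms j)" .
    have "\<not> inf ms j \<le> m"
    proof
      assume "inf ms j \<le> m"
      then have "ms \<le> m" using ms_eq by (metis sup.absorb1 order.refl)
      then show False using m_le ms_ne by auto
    qed
    then have "inf ms j = j" using below[of "inf ms j"] jsm by (meson inf.cobounded2 order_trans)
    then have "j \<le> ms" by (metis inf.cobounded1)
    then have "j \<le> sup m a" using msa by (rule order_trans)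
    then have "j = inf j (sup m a)" by (simp add: inf.absorb1)
    also have "\<dots> = sup (inf j m) (inf j a)" by (rule D)
    finally have jeq: "j = sup (inf j m) (inf j a)" .
    have "inf j m \<le> js" using below[of "inf j m"] njm by (metis inf.cobounded1 inf.cobounded2)
    moreover have "inf j a \<le> js" using below[of "inf j a"] nja by (metis inf.cobounded1 inf.cobounded2)
    ultimately have "sup (inf j m) (inf j a) \<le> js" by (rule sup_least)
    then have "j \<le> js" using jeq by simp
    then show False using njs by blast
  qed
  then have "kappa j \<le> m" unfolding kappa_def by (auto intro: Sup_least)
  then show ?thesis using njm by auto
qed


lemma dual_frame_simps:
  "W (dual_frame A) = Jinf"
  "Iset (dual_frame A) = {i \<in> Jinf. i \<le> one A}"
  "prec (dual_frame A) = (\<lambda>a b. b \<le> a)"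
  "circ (dual_frame A) = (\<lambda>a b. {c \<in> Jinf. c \<le> mul A a b})"
  "ftl (dual_frame A) = (\<lambda>a. tl A (kappa a))"
  "fmn (dual_frame A) = (\<lambda>a. mn A (kappa a))"
  "fng (dual_frame A) = (\<lambda>a. ng A (kappa a))"
  unfolding dual_frame_def by simp_all

lemma prime_facts:
  fixes A :: "('a::complete_lattice,'c) dqra_ops_scheme"
  assumes "complete_perfect_DqRA A"
  shows kap: "\<And>j a::'a. j \<in> Jinf \<Longrightarrow> a \<le> kappa j \<longleftrightarrow> \<not> j \<le> a"
    and prime: "\<And>(j::'a) S. j \<in> Jinf \<Longrightarrow> j \<le> Sup S \<Longrightarrow> \<exists>s\<in>S. j \<le> s"
proof -
  have D: "is_DqRA A" and P: "perfect TYPE('a)" using assms unfolding complete_perfect_DqRA_def by auto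
  have nk: "\<And>j::'a. j \<in> Jinf \<Longrightarrow> \<not> j \<le> kappa j"
    using Jinf_not_le_kappa[OF DqRA_distrib[OF D] P] by blast
  show K: "\<And>j a::'a. j \<in> Jinf \<Longrightarrow> a \<le> kappa j \<longleftrightarrow> \<not> j \<le> a"
  proof
    fix j a :: 'a assume "j \<in> Jinf" "a \<le> kappa j"
    then show "\<not> j \<le> a" using nk order_trans by blast
  next
    fix j a :: 'a assume "\<not> j \<le> a" then show "a \<le> kappa j" unfolding kappa_def by (intro Sup_upper) simp
  qed
  show "\<And>(j::'a) S. j \<in> Jinf \<Longrightarrow> j \<le> Sup S \<Longrightarrow> \<exists>s\<in>S. j \<le> s"
  proof (rule ccontr)
    fix j :: 'a and S assume j: "j \<in> Jinf" "j \<le> Sup S" and n: "\<not> (\<exists>s\<in>S. j \<le> s)"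
    then have "Sup S \<le> kappa j" using K[OF j(1)] by (auto intro!: Sup_least)
    then show False using j nk order_trans by blast
  qed
qed

theorem mainTheorem16:
  fixes A :: "('a::complete_lattice) dqra_ops" and B :: "('b::complete_lattice) dqra_ops"
    and h :: "'a \<Rightarrow> 'b"
  assumes "complete_perfect_DqRA A" and "complete_perfect_DqRA B"
    and "complete_hom A B h"
  shows "DqRA_frame_morphism (dual_frame B) (dual_frame A) (lower_adj h)
       \<and> (surj h \<longrightarrow> (\<forall>b\<in>Jinf. \<forall>b'\<in>Jinf.
              prec (dual_frame B) b b' \<longleftrightarrow>
              prec (dual_frame A) (lower_adj h b) (lower_adj h b')))
       \<and> (inj h \<longrightarrow> lower_adj h ` Jinf = Jinf)"
proof -
  have AD: "is_DqRA A" and PA: "perfect TYPE('a)" using assms(1) unfolding complete_perfect_DqRA_def by auto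
  have BD: "is_DqRA B" and PB: "perfect TYPE('b)" using assms(2) unfolding complete_perfect_DqRA_def by auto
  note kapA = prime_facts(1)[OF assms(1)] and primeA = prime_facts(2)[OF assms(1)]
  note kapB = prime_facts(1)[OF assms(2)] and primeB = prime_facts(2)[OF assms(2)]
  have hinf: "\<And>a b. h (inf a b) = inf (h a) (h b)"
    and hmul: "\<And>a b. h (mul A a b) = mul B (h a) (h b)"
    and hone: "h (one A) = one B"
    and htl: "\<And>a. h (tl A a) = tl B (h a)"
    and hmn: "\<And>a. h (mn A a) = mn B (h a)"
    and hng: "\<And>a. h (ng A a) = ng B (h a)"
    and hSup: "\<And>S. h (Sup S) = Sup (h ` S)"
    and hInf: "\<And>S. h (Inf S) = Inf (h ` S)"
    using assms(3) unfolding complete_hom_def by auto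
  have hmono: "\<And>a b. a \<le> b \<Longrightarrow> h a \<le> h b" by (metis hinf inf.absorb_iff1)
  define f where "f = lower_adj h"
  have unitf: "\<And>b. b \<le> h (f b)"
    unfolding f_def lower_adj_def hInf by (auto intro: INF_greatest)
  have gal: "\<And>b a. f b \<le> a \<longleftrightarrow> b \<le> h a"
  proof
    fix b a assume "f b \<le> a"
    then show "b \<le> h a" using hmono unitf order_trans by blast
  next
    fix b a assume "b \<le> h a" then show "f b \<le> a" unfolding f_def lower_adj_def by (auto intro: Inf_lower)
  qed
  have fJ: "\<And>b::'b. b \<in> Jinf \<Longrightarrow> f b \<in> Jinf"
  proof -
    fix b :: 'b assume b: "b \<in> Jinf"
    show "f b \<in> Jinf" unfolding Jinf_def
    proof (intro CollectI allI impI)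
      fix S assume S: "f b = Sup S"
      then have "b \<le> Sup (h ` S)" using gal hSup by (metis order.refl)
      then obtain s where s: "s \<in> S" "b \<le> h s" using primeB[OF b] by blast
      then have "f b \<le> s" using gal by blast
      moreover have "s \<le> f b" using S s(1) by (simp add: Sup_upper)
      ultimately show "f b \<in> S" using s(1) by (metis order.antisym)
    qed
  qed
  have fmono: "\<And>b b'. b' \<le> b \<Longrightarrow> f b' \<le> f b" using gal unitf order_trans by metis
  have M2: "\<And>x y z. z \<le> mul B x y \<Longrightarrow> f z \<le> mul A (f x) (f y)"
  proof -
    fix x y z assume "z \<le> mul B x y"
    moreover have "mul B x y \<le> mul B (h (f x)) (h (f y))" using mul_mono[OF BD unitf unitf] .
    ultimately have "z \<le> h (mul A (f x) (f y))" unfolding hmul by (rule order_trans)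
    then show "f z \<le> mul A (f x) (f y)" using gal by blast
  qed
  have M3: "\<And>z u v. z \<in> Jinf \<Longrightarrow> f z \<le> mul A u v \<Longrightarrow>
      \<exists>x\<in>Jinf. \<exists>y\<in>Jinf. f x \<le> u \<and> f y \<le> v \<and> z \<le> mul B x y"
  proof -
    fix z u v assume z: "z \<in> Jinf" and le: "f z \<le> mul A u v"
    define X where "X = {j \<in> Jinf. j \<le> h u}"
    define Y where "Y = {j \<in> Jinf. j \<le> h v}"
    have "h u = Sup X" "h v = Sup Y" using PB unfolding perfect_def X_def Y_def by blast+
    then have "z \<le> mul B (Sup X) (Sup Y)" using le gal hmul by metis
    also have "\<dots> \<le> Sup {mul B x y | x y. x \<in> X \<and> y \<in> Y}" by (rule mul_Sup[OF BD])
    finally obtain s where "s \<in> {mul B x y | x y. x \<in> X \<and> y \<in> Y}" "z \<le> s" using primeB[OF z] by blast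
    then obtain x y where "x \<in> X" "y \<in> Y" "z \<le> mul B x y" by blast
    then show "\<exists>x\<in>Jinf. \<exists>y\<in>Jinf. f x \<le> u \<and> f y \<le> v \<and> z \<le> mul B x y"
      unfolding X_def Y_def using gal by blast
  qed
  have M4: "\<And>x. x \<in> Jinf \<Longrightarrow> f (tl B (kappa x)) = tl A (kappa (f x))"
  proof (rule eq_by_up)
    fix x :: 'b and a :: 'a assume x: "x \<in> Jinf"
    have "f (tl B (kappa x)) \<le> a \<longleftrightarrow> tl B (kappa x) \<le> h a" using gal by blast
    also have "\<dots> \<longleftrightarrow> mn B (h a) \<le> kappa x" using tl_gal[OF BD] by blast
    also have "\<dots> \<longleftrightarrow> \<not> x \<le> h (mn A a)" using kapB[OF x] hmn by simp
    also have "\<dots> \<longleftrightarrow> \<not> f x \<le> mn A a" using gal by blast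
    also have "\<dots> \<longleftrightarrow> mn A a \<le> kappa (f x)" using kapA[OF fJ[OF x]] by simp
    also have "\<dots> \<longleftrightarrow> tl A (kappa (f x)) \<le> a" using tl_gal[OF AD] by blast
    finally show "f (tl B (kappa x)) \<le> a \<longleftrightarrow> tl A (kappa (f x)) \<le> a" .
  qed
  have M5: "\<And>x. x \<in> Jinf \<Longrightarrow> f (mn B (kappa x)) = mn A (kappa (f x))"
  proof (rule eq_by_up)
    fix x :: 'b and a :: 'a assume x: "x \<in> Jinf"
    have "f (mn B (kappa x)) \<le> a \<longleftrightarrow> mn B (kappa x) \<le> h a" using gal by blast
    also have "\<dots> \<longleftrightarrow> tl B (h a) \<le> kappa x" using tl_gal[OF BD] by blast
    also have "\<dots> \<longleftrightarrow> \<not> x \<le> h (tl A a)" using kapB[OF x] htl by simp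
    also have "\<dots> \<longleftrightarrow> \<not> f x \<le> tl A a" using gal by blast
    also have "\<dots> \<longleftrightarrow> tl A a \<le> kappa (f x)" using kapA[OF fJ[OF x]] by simp
    also have "\<dots> \<longleftrightarrow> mn A (kappa (f x)) \<le> a" using tl_gal[OF AD] by blast
    finally show "f (mn B (kappa x)) \<le> a \<longleftrightarrow> mn A (kappa (f x)) \<le> a" .
  qed
  have M7: "\<And>x. x \<in> Jinf \<Longrightarrow> f (ng B (kappa x)) = ng A (kappa (f x))"
  proof (rule eq_by_up)
    fix x :: 'b and a :: 'a assume x: "x \<in> Jinf"
    have "f (ng B (kappa x)) \<le> a \<longleftrightarrow> ng B (kappa x) \<le> h a" using gal by blast
    also have "\<dots> \<longleftrightarrow> ng B (h a) \<le> kappa x" using ng_gal[OF BD] by blast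
    also have "\<dots> \<longleftrightarrow> \<not> x \<le> h (ng A a)" using kapB[OF x] hng by simp
    also have "\<dots> \<longleftrightarrow> \<not> f x \<le> ng A a" using gal by blast
    also have "\<dots> \<longleftrightarrow> ng A a \<le> kappa (f x)" using kapA[OF fJ[OF x]] by simp
    also have "\<dots> \<longleftrightarrow> ng A (kappa (f x)) \<le> a" using ng_gal[OF AD] by blast
    finally show "f (ng B (kappa x)) \<le> a \<longleftrightarrow> ng A (kappa (f x)) \<le> a" .
  qed
  have M6: "{i \<in> Jinf. i \<le> one B} = {x \<in> Jinf. f x \<in> {i \<in> Jinf. i \<le> one A}}"
    using fJ gal hone by auto
  have part1: "DqRA_frame_morphism (dual_frame B) (dual_frame A) f"
    unfolding DqRA_frame_morphism_def DInFL_frame_morphism_def dual_frame_simps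
    using fJ fmono M2 M3 M4 M5 M6 M7 by auto
  have part2: "surj h \<longrightarrow> (\<forall>b\<in>Jinf. \<forall>b'\<in>Jinf.
              prec (dual_frame B) b b' \<longleftrightarrow> prec (dual_frame A) (f b) (f b'))"
  proof (intro impI ballI)
    fix b b' :: 'b assume s: "surj h"
    have cnt: "h (f c) \<le> c" for c
    proof -
      obtain a0 where "c = h a0" using s by (metis surjD)
      then show ?thesis using gal hmono by (metis order.refl)
    qed
    show "prec (dual_frame B) b b' \<longleftrightarrow> prec (dual_frame A) (f b) (f b')"
      unfolding dual_frame_simps using fmono unitf cnt hmono by (meson order_trans)
  qed
  have part3: "inj h \<longrightarrow> f ` Jinf = Jinf"
  proof
    assume inj: "inj h"
    show "f ` Jinf = Jinf"
    proof
      show "f ` Jinf \<subseteq> Jinf" using fJ by blast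
      show "Jinf \<subseteq> f ` Jinf"
      proof
        fix j :: 'a assume j: "j \<in> Jinf"
        show "j \<in> f ` Jinf"
        proof (rule ccontr)
          assume n: "j \<notin> f ` Jinf"
          have "b \<le> h (kappa j)" if "b \<in> {c \<in> Jinf. c \<le> h j}" for b
          proof -
            have "f b \<le> j" "f b \<noteq> j" using that gal n by auto
            then have "\<not> j \<le> f b" by auto
            then have "f b \<le> kappa j" using kapA[OF j] by blast
            then show ?thesis using gal by blast
          qed
          then have "Sup {c \<in> Jinf. c \<le> h j} \<le> h (kappa j)" by (rule Sup_least)
          moreover have "h j = Sup {c \<in> Jinf. c \<le> h j}" using PB unfolding perfect_def by blast
          ultimately have "h (inf j (kappa j)) = h j" using hinf by (metis inf.absorb1)
          then have "inf j (kappa j) = j" using inj by (metis injD)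
          then have "j \<le> kappa j" by (metis inf.cobounded2)
          then show False using kapA[OF j] by blast
        qed
      qed
    qed
  qed
  show ?thesis using part1 part2 part3 unfolding f_def by blast
qed

end
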